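(* Let $\mathcal{G}$ be an input-total system. If $\mathcal{G}\models\mathit{stratNI}$, then $\mathcal{G}\models\mathit{GNI}$, where $\mathit{stratNI}:=\forall\pi_1.\langle\langle\{\xi_N\}\rangle\rangle\pi_2.\ \square\big(\bigwedge_{a\in O}a_{\pi_1}\leftrightarrow a_{\pi_2}\big)$ and $\mathit{GNI}:=\forall\pi_1.\forall\pi_2.\exists\pi_3.\ \square\big(\bigwedge_{a\in H}a_{\pi_1}\leftrightarrow a_{\pi_3}\big)\wedge\square\big(\bigwedge_{a\in O}a_{\pi_2}\leftrightarrow a_{\pi_3}\big)$.
   Context: A multi-stage concurrent game structure (MSCGS) is $\mathcal{G}=(S,s_0,\Xi,\mathscr{M},\delta,d,\mathbf{AP},\ell)$: finite states $S$, initial state $s_0$, finite agents $\Xi$, finite moves $\mathscr{M}$, transition function $\delta:S\times(\Xi\to\mathscr{M})\to S$, stage function $d:\Xi\to\mathbb{N}$, atomic propositions $\mathbf{AP}$, labelling $\ell:S\to2^{\mathbf{AP}}$. A system here is an MSCGS with agents $\xi_N$ (resolving non-determinism), $\xi_H$ (choosing high-security inputs) and $\xi_L$ (choosing low-security inputs), where $\mathbf{AP}$ contains pairwise disjoint sets $H$ (high inputs), $L$ (low inputs) and $O$ (outputs), and the move of $\xi_H$ (resp. $\xi_L$) determines the values of the propositions in $H$ (resp. $L$) in the next state. The system is input-total if in each state $\xi_H$ and $\xi_L$ can choose every possible valuation of their input propositions. Semantics of $\texttt{HyperATL}^*$ used here: a strategy for agent $\xi$ is $f_\xi:S^+\times(\{\xi'\mid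 d(\xi')<d(\xi)\}\to\mathscr{M})\to\mathscr{M}$; for $A\subseteq\Xi$, strategies $F_A$ and state $s$, $\mathit{out}(\mathcal{G},s,F_A)$ is the set of $u\in S^\omega$ with $u(0)=s$ such that for all $i$ there is a global move vector $\sigma$ with $\delta(u(i),\sigma)=u(i+1)$ and $\sigma(\xi)=f_\xi(u[0,i],\sigma_{\mid\{\xi'\mid d(\xi')<d(\xi)\}})$ for all $\xi\in A$. For a path assignment $\Pi$, $\Pi\models\langle\langle A\rangle\rangle\pi.\varphi$ iff there exist $F_A$ such that for all $t\in\mathit{out}(\mathcal{G},\Pi(\epsilon)(0),F_A)$, $\Pi[\pi\mapsto t]\models\varphi$, where $\Pi(\epsilon)$ is the most recently added path ($\Pi(\epsilon)(0)=s_0$ if $\Pi$ is empty); $\forall\pi=\langle\langle\emptyset\rangle\rangle\pi$, $\exists\pi=\langle\langle\Xi\rangle\rangle\pi$; $a_\pi$ holds iff $a\in\ell$ of the current state of the path bound to $\pi$; temporal operators are interpreted synchronously on all paths. $\mathcal{G}\models\varphi$ iff the empty assignment satisfies $\varphi$. *)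

theory Defs
  imports Main
begin

text \<open>Agents of a system: the nondeterminism agent, the high-input agent, the low-input agent.\<close>
datatype agent = XiN | XiH | XiL

record ('s, 'm, 'a) mscgs =
  St    :: "'s set"
  init  :: "'s"
  Mv    :: "'m set"
  delta :: "'s \<Rightarrow> (agent \<Rightarrow> 'm) \<Rightarrow> 's"
  stage :: "agent \<Rightarrow> nat"
  AP    :: "'a set"
  lab   :: "'s \<Rightarrow> 'a set"

definition move_vec :: "('s, 'm, 'a) mscgs \<Rightarrow> (agent \<Rightarrow> 'm) \<Rightarrow> bool" where
  "move_vec G \<sigma> \<longleftrightarrow> (\<forall>\<xi>. \<sigma> \<xi> \<in> Mv G)"

definition wf_mscgs :: "('s, 'm, 'a) mscgs \<Rightarrow> bool" where
  "wf_mscgs G \<longleftrightarrow> finite (St G) \<and> init G \<in> St G \<and> finite (Mv G) \<and> Mv G \<noteq> {}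
     \<and> finite (AP G)
     \<and> (\<forall>s \<in> St G. \<forall>\<sigma>. move_vec G \<sigma> \<longrightarrow> delta G s \<sigma> \<in> St G)
     \<and> (\<forall>s \<in> St G. lab G s \<subseteq> AP G)"

definition restr :: "('s, 'm, 'a) mscgs \<Rightarrow> agent \<Rightarrow> (agent \<Rightarrow> 'm) \<Rightarrow> (agent \<Rightarrow> 'm option)" where
  "restr G \<xi> \<sigma> = (\<lambda>\<xi>'. if stage G \<xi>' < stage G \<xi> then Some (\<sigma> \<xi>') else None)"

text \<open>A strategy maps a nonempty history (list of states) and the moves of lower-stage agents to a move.\<close>
type_synonym ('s, 'm) strat = "'s list \<Rightarrow> (agent \<Rightarrow> 'm option) \<Rightarrow> 'm"

definition is_strategy :: "('s, 'm, 'a) mscgs \<Rightarrow> ('s, 'm) strat \<Rightarrow> bool" where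
  "is_strategy G f \<longleftrightarrow> (\<forall>h r. f h r \<in> Mv G)"

definition out :: "('s, 'm, 'a) mscgs \<Rightarrow> 's \<Rightarrow> (agent \<Rightarrow> ('s, 'm) strat) \<Rightarrow> agent set
                   \<Rightarrow> (nat \<Rightarrow> 's) set" where
  "out G s F A = {u. u 0 = s \<and> (\<forall>i. u i \<in> St G) \<and>
      (\<forall>i. \<exists>\<sigma>. move_vec G \<sigma> \<and> delta G (u i) \<sigma> = u (Suc i) \<and>
             (\<forall>\<xi> \<in> A. \<sigma> \<xi> = F \<xi> (map u [0..<Suc i]) (restr G \<xi> \<sigma>)))}"

text \<open>Semantics of the strategy quantifier  <<A>> pi. phi, started at state s (the first
  state of the most recently added path); P describes phi as a predicate of the new path.\<close>
definition strat_q :: "('s, 'm, 'a) mscgs \<Rightarrow> agent set \<Rightarrow> 's \<Rightarrow> ((nat \<Rightarrow> 's) \<Rightarrow> bool) \<Rightarrow> bool" where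
  "strat_q G A s P \<longleftrightarrow> (\<exists>F. (\<forall>\<xi> \<in> A. is_strategy G (F \<xi>)) \<and> (\<forall>t \<in> out G s F A. P t))"

abbreviation all_path where "all_path G s P \<equiv> strat_q G {} s P"
abbreviation ex_path where "ex_path G s P \<equiv> strat_q G UNIV s P"

definition glob_agree :: "('s, 'm, 'a) mscgs \<Rightarrow> 'a set \<Rightarrow> (nat \<Rightarrow> 's) \<Rightarrow> (nat \<Rightarrow> 's) \<Rightarrow> bool" where
  "glob_agree G X t t' \<longleftrightarrow> (\<forall>i. \<forall>a \<in> X. a \<in> lab G (t i) \<longleftrightarrow> a \<in> lab G (t' i))"

definition is_system :: "('s, 'm, 'a) mscgs \<Rightarrow> 'a set \<Rightarrow> 'a set \<Rightarrow> 'a set \<Rightarrow> bool" where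
  "is_system G H L Ou \<longleftrightarrow> wf_mscgs G \<and> H \<subseteq> AP G \<and> L \<subseteq> AP G \<and> Ou \<subseteq> AP G
     \<and> H \<inter> L = {} \<and> H \<inter> Ou = {} \<and> L \<inter> Ou = {}
     \<and> (\<forall>s \<in> St G. \<forall>\<sigma> \<sigma>'. move_vec G \<sigma> \<longrightarrow> move_vec G \<sigma>' \<longrightarrow> \<sigma> XiH = \<sigma>' XiH
           \<longrightarrow> lab G (delta G s \<sigma>) \<inter> H = lab G (delta G s \<sigma>') \<inter> H)
     \<and> (\<forall>s \<in> St G. \<forall>\<sigma> \<sigma>'. move_vec G \<sigma> \<longrightarrow> move_vec G \<sigma>' \<longrightarrow> \<sigma> XiL = \<sigma>' XiL
           \<longrightarrow> lab G (delta G s \<sigma>) \<inter> L = lab G (delta G s \<sigma>') \<inter> L)"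

definition input_total :: "('s, 'm, 'a) mscgs \<Rightarrow> 'a set \<Rightarrow> 'a set \<Rightarrow> bool" where
  "input_total G H L \<longleftrightarrow>
     (\<forall>s \<in> St G. \<forall>V \<subseteq> H. \<exists>m \<in> Mv G. \<forall>\<sigma>. move_vec G \<sigma> \<longrightarrow> \<sigma> XiH = m
           \<longrightarrow> lab G (delta G s \<sigma>) \<inter> H = V)
   \<and> (\<forall>s \<in> St G. \<forall>V \<subseteq> L. \<exists>m \<in> Mv G. \<forall>\<sigma>. move_vec G \<sigma> \<longrightarrow> \<sigma> XiL = m
           \<longrightarrow> lab G (delta G s \<sigma>) \<inter> L = V)"

definition stratNI :: "('s, 'm, 'a) mscgs \<Rightarrow> 'a set \<Rightarrow> bool" where
  "stratNI G Ou \<longleftrightarrow> all_path G (init G) (\<lambda>t1. strat_q G {XiN} (t1 0) (\<lambda>t2. glob_agree G Ou t1 t2))"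

definition GNI :: "('s, 'm, 'a) mscgs \<Rightarrow> 'a set \<Rightarrow> 'a set \<Rightarrow> bool" where
  "GNI G H Ou \<longleftrightarrow> all_path G (init G) (\<lambda>t1. all_path G (t1 0) (\<lambda>t2. ex_path G (t2 0)
      (\<lambda>t3. glob_agree G H t1 t3 \<and> glob_agree G Ou t2 t3)))"

end

theory Submission
  imports Defs
begin

lemma out_empty: "out G s F {} = out G s F' {}"
  by (simp add: out_def)

theorem lemma4p1:
  fixes G :: "('s, 'm, 'a) mscgs" and H L Ou :: "'a set"
  assumes "is_system G H L Ou"
    and "input_total G H L"
    and "stratNI G Ou"
  shows "GNI G H Ou"
proof -
  have Mvne: "Mv G \<noteq> {}" using assms(1) by (simp add: is_system_def wf_mscgs_def)
  have itH: "\<forall>s \<in> St G. \<forall>V \<subseteq> H. \<exists>m \<in> Mv G. \<forall>\<sigma>. move_vec G \<sigma> \<longrightarrow> \<sigma> XiH = m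
           \<longrightarrow> lab G (delta G s \<sigma>) \<inter> H = V" using assms(2) by (simp add: input_total_def)
  obtain F0 where F0: "\<forall>t\<in>out G (init G) F0 {}. strat_q G {XiN} (t 0) (glob_agree G Ou t)"
    using assms(3) unfolding stratNI_def strat_q_def by auto
  have key: "\<exists>F. (\<forall>\<xi>\<in>UNIV. is_strategy G (F \<xi>)) \<and>
      (\<forall>t3\<in>out G (t2 0) F UNIV. glob_agree G H t1 t3 \<and> glob_agree G Ou t2 t3)"
    if t1: "t1 \<in> out G (init G) F0 {}" and t2: "t2 \<in> out G (t1 0) F0 {}" for t1 t2
  proof -
    have t10: "t1 0 = init G" using t1 by (simp add: out_def)
    have t20: "t2 0 = init G" using t2 t10 by (simp add: out_def)
    have t2in: "t2 \<in> out G (init G) F0 {}" using t2 t10 by simp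
    obtain FN where FN: "is_strategy G (FN XiN)"
      "\<forall>t\<in>out G (init G) FN {XiN}. glob_agree G Ou t2 t"
      using F0 t2in t20 unfolding strat_q_def by auto
    define mH where "mH h r = (SOME m. m \<in> Mv G \<and> (last h \<in> St G \<longrightarrow>
       (\<forall>\<sigma>. move_vec G \<sigma> \<longrightarrow> \<sigma> XiH = m \<longrightarrow>
          lab G (delta G (last h) \<sigma>) \<inter> H = lab G (t1 (length h)) \<inter> H)))"
      for h :: "'s list" and r :: "agent \<Rightarrow> 'm option"
    have mH: "mH h r \<in> Mv G \<and> (last h \<in> St G \<longrightarrow>
       (\<forall>\<sigma>. move_vec G \<sigma> \<longrightarrow> \<sigma> XiH = mH h r \<longrightarrow>
          lab G (delta G (last h) \<sigma>) \<inter> H = lab G (t1 (length h)) \<inter> H))" for h r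
    proof -
      have "\<exists>m. m \<in> Mv G \<and> (last h \<in> St G \<longrightarrow>
       (\<forall>\<sigma>. move_vec G \<sigma> \<longrightarrow> \<sigma> XiH = m \<longrightarrow>
          lab G (delta G (last h) \<sigma>) \<inter> H = lab G (t1 (length h)) \<inter> H))"
      proof (cases "last h \<in> St G")
        case True
        then show ?thesis using itH[rule_format, OF True, of "lab G (t1 (length h)) \<inter> H"] by blast
      next
        case False
        then show ?thesis using Mvne by blast
      qed
      then show ?thesis unfolding mH_def by (rule someI_ex)
    qed
    define F where "F = (\<lambda>\<xi>. case \<xi> of XiN \<Rightarrow> FN XiN | XiH \<Rightarrow> mH
        | XiL \<Rightarrow> (\<lambda>h r. SOME m. m \<in> Mv G))"
    have strat: "\<forall>\<xi>\<in>UNIV. is_strategy G (F \<xi>)"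
    proof
      fix \<xi> :: agent
      show "is_strategy G (F \<xi>)"
        using FN(1) mH Mvne by (cases \<xi>) (auto simp: F_def is_strategy_def some_in_eq)
    qed
    have "glob_agree G H t1 t3 \<and> glob_agree G Ou t2 t3" if t3: "t3 \<in> out G (t2 0) F UNIV" for t3
    proof
      have "t3 \<in> out G (init G) FN {XiN}"
        using t3 t20 unfolding out_def
      proof (intro CollectI conjI allI)
        fix i
        assume A: "t3 \<in> {u. u 0 = t2 0 \<and> (\<forall>i. u i \<in> St G) \<and>
      (\<forall>i. \<exists>\<sigma>. move_vec G \<sigma> \<and> delta G (u i) \<sigma> = u (Suc i) \<and>
             (\<forall>\<xi> \<in> UNIV. \<sigma> \<xi> = F \<xi> (map u [0..<Suc i]) (restr G \<xi> \<sigma>)))}"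
        then obtain \<sigma> where "move_vec G \<sigma>" "delta G (t3 i) \<sigma> = t3 (Suc i)"
          "\<sigma> XiN = F XiN (map t3 [0..<Suc i]) (restr G XiN \<sigma>)" by blast
        then show "\<exists>\<sigma>. move_vec G \<sigma> \<and> delta G (t3 i) \<sigma> = t3 (Suc i) \<and>
             (\<forall>\<xi> \<in> {XiN}. \<sigma> \<xi> = FN \<xi> (map t3 [0..<Suc i]) (restr G \<xi> \<sigma>))"
          by (auto simp: F_def)
      qed (use t20 in auto)
      then show "glob_agree G Ou t2 t3" using FN(2) by blast
    next
      have t30: "t3 0 = init G" using t3 t20 by (simp add: out_def)
      have "lab G (t3 i) \<inter> H = lab G (t1 i) \<inter> H" for i
      proof (cases i)
        case 0 then show ?thesis using t30 t10 by simp
      next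
        case (Suc j)
        from t3 obtain \<sigma> where s: "move_vec G \<sigma>" "delta G (t3 j) \<sigma> = t3 (Suc j)"
          "\<sigma> XiH = F XiH (map t3 [0..<Suc j]) (restr G XiH \<sigma>)"
          unfolding out_def by blast
        have inS: "t3 j \<in> St G" using t3 unfolding out_def by blast
        have "last (map t3 [0..<Suc j]) = t3 j" by simp
        moreover have "length (map t3 [0..<Suc j]) = Suc j" by simp
        ultimately have "lab G (delta G (t3 j) \<sigma>) \<inter> H = lab G (t1 (Suc j)) \<inter> H"
          using mH[of "map t3 [0..<Suc j]" "restr G XiH \<sigma>"] s(1,3) inS
          by (simp only: F_def agent.case)
        then show ?thesis using s(2) Suc by simp
      qed
      then show "glob_agree G H t1 t3" unfolding glob_agree_def by blast
    qed
    with strat show ?thesis by blast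
  qed
  show ?thesis unfolding GNI_def strat_q_def
    apply (rule exI[of _ F0])
    apply simp
    using key by blast
qed

end
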